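(* Let $3\le p\le q<\omega$, $0\le n<\omega$, and $0\le i,j\le p$ with $i\ne j$. Then $\mathfrak L^{ij}(p,n)$ is isomorphic to a subalgebra of $\mathfrak L(q,n)$.
   Context: For $3\le p<\omega$, $0\le n<\omega$, $\mathfrak L(p,n)$ is the finite symmetric (i.e. $\breve x=x$ for all $x$) integral (i.e. $1'$ is an atom) relation algebra with atoms $1',a_0,\dots,a_p,t_1,\dots,t_n$ whose composition of atoms is given, for $0\le i,j\le p$, $i\ne j$, $1\le k,l\le n$, $k\ne l$, by: $a_i;a_i=1'+a_i$; $a_i;a_j=0'\cdot\overline{a_i+a_j}$ (where $0'=\overline{1'}$); $a_i;t_k=t_1+\cdots+t_n$; $t_k;t_k=1'+a_0+\cdots+a_p$; $t_k;t_l=a_0+\cdots+a_p$ (and composition with $1'$ is the identity). For $0\le i,j\le p$, $i\ne j$, $\mathfrak L^{ij}(p,n)$ is the subalgebra of $\mathfrak L(p,n)$ whose atoms are $1'$, $a_i+a_j$, the $a_k$ for $0\le k\le p$ with $k\ne i,j$, and $t_1,\dots,t_n$. *)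

theory Defs
  imports Main
begin

text \<open>Atoms of the finite relation algebras L(p,n): the identity atom 1',
  the atoms a_0..a_p (A i), and t_1..t_n (T k).
  Elements of the (complete atomic) algebra are represented as sets of atoms.\<close>

datatype atm = Id | A nat | T nat

record 'a ra =
  carrier :: "'a set"
  join :: "'a \<Rightarrow> 'a \<Rightarrow> 'a"
  compl :: "'a \<Rightarrow> 'a"
  rcomp :: "'a \<Rightarrow> 'a \<Rightarrow> 'a"
  conv :: "'a \<Rightarrow> 'a"
  ident :: "'a"

definition Aats :: "nat \<Rightarrow> atm set" where
  "Aats p = A ` {0..p}"

definition Tats :: "nat \<Rightarrow> atm set" where
  "Tats n = T ` {1..n}"

definition atoms :: "nat \<Rightarrow> nat \<Rightarrow> atm set" where
  "atoms p n = {Id} \<union> Aats p \<union> Tats n"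

fun atcomp :: "nat \<Rightarrow> nat \<Rightarrow> atm \<Rightarrow> atm \<Rightarrow> atm set" where
  "atcomp p n Id y = {y}"
| "atcomp p n x Id = {x}"
| "atcomp p n (A i) (A j) =
     (if i = j then {Id, A i} else atoms p n - {Id, A i, A j})"
| "atcomp p n (A i) (T k) = Tats n"
| "atcomp p n (T k) (A i) = Tats n"
| "atcomp p n (T k) (T l) = (if k = l then {Id} \<union> Aats p else Aats p)"

definition L :: "nat \<Rightarrow> nat \<Rightarrow> atm set ra" where
  "L p n = \<lparr> carrier = Pow (atoms p n),
             join = (\<lambda>X Y. X \<union> Y),
             compl = (\<lambda>X. atoms p n - X),
             rcomp = (\<lambda>X Y. \<Union>x\<in>X. \<Union>y\<in>Y. atcomp p n x y),
             conv = (\<lambda>X. X),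
             ident = {Id} \<rparr>"

definition atoms_ij :: "nat \<Rightarrow> nat \<Rightarrow> nat \<Rightarrow> nat \<Rightarrow> atm set set" where
  "atoms_ij p n i j = {{Id}, {A i, A j}} \<union> {{A k} | k. k \<le> p \<and> k \<noteq> i \<and> k \<noteq> j}
      \<union> {{T k} | k. 1 \<le> k \<and> k \<le> n}"

definition restrict_ra :: "'a ra \<Rightarrow> 'a set \<Rightarrow> 'a ra" where
  "restrict_ra R S = R\<lparr>carrier := S\<rparr>"

definition Lij :: "nat \<Rightarrow> nat \<Rightarrow> nat \<Rightarrow> nat \<Rightarrow> atm set ra" where
  "Lij p n i j = restrict_ra (L p n) {\<Union>B | B. B \<subseteq> atoms_ij p n i j}"

definition subalgebra :: "'a set \<Rightarrow> 'a ra \<Rightarrow> bool" where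
  "subalgebra S R \<longleftrightarrow> S \<subseteq> carrier R \<and> ident R \<in> S
     \<and> (\<forall>x\<in>S. \<forall>y\<in>S. join R x y \<in> S \<and> rcomp R x y \<in> S)
     \<and> (\<forall>x\<in>S. compl R x \<in> S \<and> conv R x \<in> S)"

definition ra_iso :: "('a \<Rightarrow> 'b) \<Rightarrow> 'a ra \<Rightarrow> 'b ra \<Rightarrow> bool" where
  "ra_iso f R S \<longleftrightarrow> bij_betw f (carrier R) (carrier S)
     \<and> f (ident R) = ident S
     \<and> (\<forall>x\<in>carrier R. \<forall>y\<in>carrier R.
          f (join R x y) = join S (f x) (f y) \<and> f (rcomp R x y) = rcomp S (f x) (f y))
     \<and> (\<forall>x\<in>carrier R. f (compl R x) = compl S (f x) \<and> f (conv R x) = conv S (f x))"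

end

theory Submission imports Defs begin

lemma mem_atoms[simp]: "Id \<in> atoms p n" "A k \<in> atoms p n \<longleftrightarrow> k \<le> p" "T k \<in> atoms p n \<longleftrightarrow> 1 \<le> k \<and> k \<le> n"
  by (auto simp: atoms_def Aats_def Tats_def)

lemma mem_Aats[simp]: "Id \<notin> Aats p" "A k \<in> Aats p \<longleftrightarrow> k \<le> p" "T k \<notin> Aats p"
  by (auto simp: Aats_def)
lemma mem_Tats[simp]: "Id \<notin> Tats n" "A k \<notin> Tats n" "T k \<in> Tats n \<longleftrightarrow> 1 \<le> k \<and> k \<le> n"
  by (auto simp: Tats_def)

definition rc where "rc p n X Y = (\<Union>x\<in>X. \<Union>y\<in>Y. atcomp p n x y)"

lemma rc_Id: "X \<subseteq> atoms p n \<Longrightarrow> Y \<subseteq> atoms p n \<Longrightarrow> Id \<in> rc p n X Y \<longleftrightarrow> (\<exists>x. x\<in>X \<and> x\<in>Y)"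
  unfolding rc_def
  apply auto
  subgoal for x y by (cases x; cases y; auto split: if_splits)
  subgoal for x apply (rule bexI[of _ x], rule bexI[of _ x]) by (cases x; auto)+
  done

lemma rc_A: "X \<subseteq> atoms p n \<Longrightarrow> Y \<subseteq> atoms p n \<Longrightarrow> A k \<in> rc p n X Y \<longleftrightarrow> k \<le> p \<and>
  ((Id\<in>X \<and> A k\<in>Y) \<or> (A k\<in>X \<and> Id\<in>Y) \<or> (A k\<in>X \<and> A k\<in>Y) \<or>
   (\<exists>l m. A l\<in>X \<and> A m\<in>Y \<and> l\<noteq>m \<and> k\<noteq>l \<and> k\<noteq>m) \<or> ((\<exists>a. T a\<in>X) \<and> (\<exists>b. T b\<in>Y)))"
  unfolding rc_def
  apply (rule iffI)
  apply clarsimp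
  subgoal for x y by (cases x; cases y; auto split: if_splits)
  apply (elim conjE disjE exE)
  apply force
  apply force
  apply force
  subgoal for l m apply (rule UN_I[of "A l"], simp) apply (rule UN_I[of "A m"], auto) done
  subgoal for a b apply (rule UN_I[of "T a"], simp) apply (rule UN_I[of "T b"], auto) done
  done

lemma rc_T: "X \<subseteq> atoms p n \<Longrightarrow> Y \<subseteq> atoms p n \<Longrightarrow> T k \<in> rc p n X Y \<longleftrightarrow> 1 \<le> k \<and> k \<le> n \<and>
  ((Id\<in>X \<and> T k\<in>Y) \<or> (T k\<in>X \<and> Id\<in>Y) \<or> ((\<exists>l. A l\<in>X) \<and> (\<exists>b. T b\<in>Y)) \<or>
   ((\<exists>a. T a\<in>X) \<and> (\<exists>l. A l\<in>Y)) \<or> (\<exists>l m. A l\<in>X \<and> A m\<in>Y \<and> l\<noteq>m))"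
  unfolding rc_def
  apply (rule iffI)
  apply clarsimp
  subgoal for x y by (cases x; cases y; auto split: if_splits)
  apply (elim conjE disjE exE)
  apply force
  apply force
  subgoal for l b apply (rule UN_I[of "A l"], simp) apply (rule UN_I[of "T b"], auto) done
  subgoal for a l apply (rule UN_I[of "T a"], simp) apply (rule UN_I[of "A l"], auto) done
  subgoal for l m apply (rule UN_I[of "A l"], simp) apply (rule UN_I[of "A m"], auto) done
  done

lemma Aats_sub: "Aats p \<subseteq> atoms p n" and Tats_sub: "Tats n \<subseteq> atoms p n" by (auto simp: atoms_def)

lemma rc_sub: "X \<subseteq> atoms p n \<Longrightarrow> Y \<subseteq> atoms p n \<Longrightarrow> rc p n X Y \<subseteq> atoms p n"
  unfolding rc_def
  apply clarsimp
  subgoal for z x y by (cases x; cases y; auto simp: atoms_def split: if_splits)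
  done

definition Fm where "Fm p q i X = X \<union> (if A i \<in> X then A ` {p<..q} else {})"

lemma Fm_mem[simp]: "Id \<in> Fm p q i X \<longleftrightarrow> Id \<in> X" "A k \<in> Fm p q i X \<longleftrightarrow> A k \<in> X \<or> (p < k \<and> k \<le> q \<and> A i \<in> X)"
  "T k \<in> Fm p q i X \<longleftrightarrow> T k \<in> X"
  by (auto simp: Fm_def)

lemma Fm_sub: "X \<subseteq> atoms p n \<Longrightarrow> p \<le> q \<Longrightarrow> Fm p q i X \<subseteq> atoms q n"
  apply (rule subsetI) subgoal for z by (cases z; auto) done

lemma Fm_meet: "X \<subseteq> atoms p n \<Longrightarrow> Y \<subseteq> atoms p n \<Longrightarrow>
   (\<exists>x. x \<in> Fm p q i X \<and> x \<in> Fm p q i Y) \<longleftrightarrow> (\<exists>x. x \<in> X \<and> x \<in> Y)"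
  apply (rule iffI)
   apply (erule exE) subgoal for x by (cases x; auto)
  apply (auto simp: Fm_def) done

lemma Fm_exA: "(\<exists>l. A l \<in> Fm p q i X) \<longleftrightarrow> (\<exists>l. A l \<in> X)"
  by (auto simp: Fm_def)

lemma Fm_pair:
  assumes "A i \<in> X \<longleftrightarrow> A j \<in> X" "A i \<in> Y \<longleftrightarrow> A j \<in> Y" "i \<le> p" "j \<le> p" "i \<noteq> j" "\<And>m. A m \<in> X \<Longrightarrow> m \<le> p" "\<And>m. A m \<in> Y \<Longrightarrow> m \<le> p"
  shows "(\<exists>l m. A l \<in> Fm p q i X \<and> A m \<in> Fm p q i Y \<and> l \<noteq> m) \<longleftrightarrow> (\<exists>l m. A l \<in> X \<and> A m \<in> Y \<and> l \<noteq> m)"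
proof
  assume "\<exists>l m. A l \<in> Fm p q i X \<and> A m \<in> Fm p q i Y \<and> l \<noteq> m"
  then obtain l m where lm: "A l \<in> Fm p q i X" "A m \<in> Fm p q i Y" "l \<noteq> m" by blast
  show "\<exists>l m. A l \<in> X \<and> A m \<in> Y \<and> l \<noteq> m"
  proof (cases "l \<le> p")
    case True
    then have l: "A l \<in> X" using lm by auto
    show ?thesis
    proof (cases "m \<le> p")
      case True then show ?thesis using l lm by auto
    next
      case False then have "A i \<in> Y" "A j \<in> Y" using lm assms by auto
      then show ?thesis using l assms by (cases "l = i") auto
    qed
  next
    case False
    then have x: "A i \<in> X" "A j \<in> X" using lm assms by auto
    show ?thesis
    proof (cases "m \<le> p")
      case True then have "A m \<in> Y" using lm by auto
      then show ?thesis using x assms by (cases "m = i") auto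
    next
      case False then have "A i \<in> Y" "A j \<in> Y" using lm assms by auto
      then show ?thesis using x assms by auto
    qed
  qed
qed (auto simp: Fm_def)

lemma LM1:
  assumes "A i \<in> X \<longleftrightarrow> A j \<in> X" "A i \<in> Y \<longleftrightarrow> A j \<in> Y" "i \<le> p" "j \<le> p" "i \<noteq> j" "\<And>m. A m \<in> X \<Longrightarrow> m \<le> p" "\<And>m. A m \<in> Y \<Longrightarrow> m \<le> p" "k \<le> p"
    "A l \<in> Fm p q i X" "A m \<in> Fm p q i Y" "l \<noteq> m" "k \<noteq> l" "k \<noteq> m"
  shows "(\<exists>l m. A l \<in> X \<and> A m \<in> Y \<and> l \<noteq> m \<and> k \<noteq> l \<and> k \<noteq> m) \<or> (A k \<in> X \<and> A k \<in> Y)"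
proof (cases "l \<le> p")
  case True
  then have l: "A l \<in> X" using assms by auto
  show ?thesis
  proof (cases "m \<le> p")
    case True then show ?thesis using l assms by auto
  next
    case False then have y: "A i \<in> Y" "A j \<in> Y" using assms by auto
    show ?thesis
    proof (cases "l = i \<or> l = j")
      case True
      then have "A i \<in> X" "A j \<in> X" using l assms by auto
      then show ?thesis using y assms True by (cases "k = i \<or> k = j") auto
    next
      case False
      then show ?thesis using y l assms by (cases "k = i") auto
    qed
  qed
next
  case False
  then have x: "A i \<in> X" "A j \<in> X" using assms by auto
  show ?thesis
  proof (cases "m \<le> p")
    case True then have m: "A m \<in> Y" using assms by auto
    show ?thesis
    proof (cases "m = i \<or> m = j")
      case True
      then have "A i \<in> Y" "A j \<in> Y" using m assms by auto
      then show ?thesis using x assms True by (cases "k = i \<or> k = j") auto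
    next
      case False
      then show ?thesis using x m assms by (cases "k = i") auto
    qed
  next
    case False then have "A i \<in> Y" "A j \<in> Y" using assms by auto
    then show ?thesis using x assms by (cases "k = i \<or> k = j") auto
  qed
qed

lemma LM2:
  assumes "A i \<in> X \<longleftrightarrow> A j \<in> X" "A i \<in> Y \<longleftrightarrow> A j \<in> Y" "i \<le> p" "j \<le> p" "i \<noteq> j" "\<And>m. A m \<in> X \<Longrightarrow> m \<le> p" "\<And>m. A m \<in> Y \<Longrightarrow> m \<le> p"
    "A l \<in> Fm p q i X" "A m \<in> Fm p q i Y" "l \<noteq> m"
  shows "(\<exists>l m. A l \<in> X \<and> A m \<in> Y \<and> l \<noteq> m \<and> i \<noteq> l \<and> i \<noteq> m) \<or> (A i \<in> X \<and> A i \<in> Y)"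
proof -
  obtain l' where l': "A l' \<in> X" "l' = l \<or> l' = i" "l' \<le> p" using assms
    apply (cases "l \<le> p") by auto
  obtain m' where m': "A m' \<in> Y" "m' = m \<or> m' = i" "m' \<le> p" using assms
    apply (cases "m \<le> p") by auto
  show ?thesis
  proof (cases "l' = i \<or> m' = i")
    case True
    then show ?thesis
    proof
      assume li: "l' = i"
      then have x: "A i \<in> X" "A j \<in> X" using l' assms by auto
      show ?thesis
      proof (cases "m' = i \<or> m' = j")
        case True then show ?thesis using x m' assms by auto
      next
        case False then show ?thesis using x m' assms by auto
      qed
    next
      assume mi: "m' = i"
      then have y: "A i \<in> Y" "A j \<in> Y" using m' assms by auto
      show ?thesis
      proof (cases "l' = i \<or> l' = j")
        case True then show ?thesis using y l' assms by auto
      next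
        case False then show ?thesis using y l' assms by auto
      qed
    qed
  next
    case False
    then have "l' \<noteq> m'" using l' m' assms by auto
    then show ?thesis using False l' m' by blast
  qed
qed

lemma Fm_hom:
  assumes "X \<subseteq> atoms p n" "Y \<subseteq> atoms p n" "A i \<in> X \<longleftrightarrow> A j \<in> X" "A i \<in> Y \<longleftrightarrow> A j \<in> Y"
    "i \<le> p" "j \<le> p" "i \<noteq> j" "p \<le> q"
  shows "Fm p q i (rc p n X Y) = rc q n (Fm p q i X) (Fm p q i Y)"
proof (rule set_eqI)
  fix z
  have s: "Fm p q i X \<subseteq> atoms q n" "Fm p q i Y \<subseteq> atoms q n" "rc p n X Y \<subseteq> atoms p n"
    using assms Fm_sub rc_sub by auto
  have bX: "\<And>m. A m \<in> X \<Longrightarrow> m \<le> p" and bY: "\<And>m. A m \<in> Y \<Longrightarrow> m \<le> p"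
    using assms(1,2) by auto
  note fp = Fm_pair[OF assms(3,4,5,6,7) bX bY]
  show "z \<in> Fm p q i (rc p n X Y) \<longleftrightarrow> z \<in> rc q n (Fm p q i X) (Fm p q i Y)"
  proof (cases z)
    case Id
    then show ?thesis using assms s Fm_meet[of X p n Y q i] by (auto simp: rc_Id)
  next
    case (T k)
    have e: "z \<in> Fm p q i (rc p n X Y) \<longleftrightarrow> T k \<in> rc p n X Y" using T by simp
    show ?thesis unfolding e unfolding T
      apply (simp only: rc_T[OF assms(1,2)] rc_T[OF s(1,2)] Fm_exA fp)
      apply simp
      done
  next
    case (A k)
    consider "k \<le> p" | "p < k \<and> k \<le> q" | "q < k" by linarith
    then show ?thesis
    proof cases
      case 1
      have e: "z \<in> Fm p q i (rc p n X Y) \<longleftrightarrow> A k \<in> rc p n X Y" using A 1 by auto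
      show ?thesis unfolding e unfolding A
        apply (simp only: rc_A[OF assms(1,2)] rc_A[OF s(1,2)])
        apply (rule iffI)
         apply (elim conjE disjE exE)
             apply (use 1 assms in auto)[4]
         apply (use 1 assms in force)
        apply (elim conjE disjE exE)
            apply (use 1 assms in auto)[3]
         subgoal for l m using LM1[OF assms(3,4,5,6,7) bX bY 1, where l=l and m=m and q=q] 1 by auto
        apply (use 1 assms in auto)
        done
    next
      case 2
      have e: "z \<in> Fm p q i (rc p n X Y) \<longleftrightarrow> A i \<in> rc p n X Y" using A 2 s(3) by auto
      show ?thesis unfolding e unfolding A
        apply (simp only: rc_A[OF assms(1,2)] rc_A[OF s(1,2)])
        apply (rule iffI)
         apply (elim conjE disjE exE)
             apply (use 2 assms in auto)[3]
          subgoal for l m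
            apply (rule conjI) using 2 apply simp
            apply (rule disjI2, rule disjI2, rule disjI2, rule disjI1)
            apply (rule exI[of _ l], rule exI[of _ m]) using 2 bX[of l] bY[of m] by auto
         apply (use 2 assms in force)
        apply (elim conjE disjE exE)
            apply (use 2 assms in auto)[3]
         subgoal for l m using LM2[OF assms(3,4,5,6,7) bX bY, where l=l and m=m and q=q] 2 assms(5) by auto
        apply (use 2 assms in auto)
        done
    next
      case 3
      then show ?thesis using A s rc_sub[OF s(1,2)] assms(8) by auto
    qed
  qed
qed

lemma rc_block:
  assumes "X \<subseteq> atoms p n" "Y \<subseteq> atoms p n" "A i \<in> X \<longleftrightarrow> A j \<in> X" "A i \<in> Y \<longleftrightarrow> A j \<in> Y"
    "i \<le> p" "j \<le> p" "i \<noteq> j" "A i \<in> rc p n X Y"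
  shows "A j \<in> rc p n X Y"
proof -
  have h: "(atm.Id\<in>X \<and> A i\<in>Y) \<or> (A i\<in>X \<and> atm.Id\<in>Y) \<or> (A i\<in>X \<and> A i\<in>Y) \<or>
   (\<exists>l m. A l\<in>X \<and> A m\<in>Y \<and> l\<noteq>m \<and> i\<noteq>l \<and> i\<noteq>m) \<or> ((\<exists>a. T a\<in>X) \<and> (\<exists>b. T b\<in>Y))"
    using assms(8) rc_A[OF assms(1,2)] by blast
  have "(atm.Id\<in>X \<and> A j\<in>Y) \<or> (A j\<in>X \<and> atm.Id\<in>Y) \<or> (A j\<in>X \<and> A j\<in>Y) \<or>
   (\<exists>l m. A l\<in>X \<and> A m\<in>Y \<and> l\<noteq>m \<and> j\<noteq>l \<and> j\<noteq>m) \<or> ((\<exists>a. T a\<in>X) \<and> (\<exists>b. T b\<in>Y))"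
  proof -
    { fix l m assume lm: "A l\<in>X" "A m\<in>Y" "l\<noteq>m" "i\<noteq>l" "i\<noteq>m"
      have "\<exists>l m. A l\<in>X \<and> A m\<in>Y \<and> l\<noteq>m \<and> j\<noteq>l \<and> j\<noteq>m"
      proof (cases "l = j")
        case True then show ?thesis using lm assms(3) by (intro exI[of _ i] exI[of _ m]) auto
      next
        case False
        show ?thesis
        proof (cases "m = j")
          case True then show ?thesis using lm assms(4) False by (intro exI[of _ l] exI[of _ i]) auto
        next
          case False2: False
          then show ?thesis using lm False by blast
        qed
      qed }
    then show ?thesis using h assms(3,4) by blast
  qed
  then show ?thesis using rc_A[OF assms(1,2)] assms(6) by blast
qed

lemma carrier_Lij:
  assumes "i \<le> p" "j \<le> p" "i \<noteq> j"
  shows "carrier (Lij p n i j) = {X. X \<subseteq> atoms p n \<and> (A i \<in> X \<longleftrightarrow> A j \<in> X)}"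
proof (rule set_eqI, rule iffI)
  fix X assume "X \<in> carrier (Lij p n i j)"
  then obtain B where B: "X = \<Union>B" "B \<subseteq> atoms_ij p n i j"
    by (auto simp: Lij_def restrict_ra_def)
  then show "X \<in> {X. X \<subseteq> atoms p n \<and> (A i \<in> X \<longleftrightarrow> A j \<in> X)}"
    using assms by (auto simp: atoms_ij_def)
next
  fix X assume X: "X \<in> {X. X \<subseteq> atoms p n \<and> (A i \<in> X \<longleftrightarrow> A j \<in> X)}"
  let ?B = "{b \<in> atoms_ij p n i j. b \<subseteq> X}"
  have "X = \<Union>?B"
  proof
    show "\<Union>?B \<subseteq> X" by auto
    show "X \<subseteq> \<Union>?B"
    proof
      fix x assume x: "x \<in> X"
      show "x \<in> \<Union>?B"
      proof (cases x)
        case Id then show ?thesis using x by (auto simp: atoms_ij_def)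
      next
        case (A k)
        show ?thesis
        proof (cases "k = i \<or> k = j")
          case True
          then have "{A i, A j} \<in> ?B" using X x A by (auto simp: atoms_ij_def)
          then show ?thesis using True A by blast
        next
          case False
          then have "{A k} \<in> ?B" using X x A by (auto simp: atoms_ij_def)
          then show ?thesis using A by blast
        qed
      next
        case (T k)
        then have "{T k} \<in> ?B" using X x by (auto simp: atoms_ij_def)
        then show ?thesis using T by blast
      qed
    qed
  qed
  then show "X \<in> carrier (Lij p n i j)"
    by (auto simp: Lij_def restrict_ra_def)
qed

lemma Fm_un: "Fm p q i (X \<union> Y) = Fm p q i X \<union> Fm p q i Y" by (auto simp: Fm_def)

lemma Fm_compl:
  assumes "X \<subseteq> atoms p n" "i \<le> p" "p \<le> q"
  shows "Fm p q i (atoms p n - X) = atoms q n - Fm p q i X"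
proof (rule set_eqI)
  fix z show "z \<in> Fm p q i (atoms p n - X) \<longleftrightarrow> z \<in> atoms q n - Fm p q i X"
    using assms by (cases z) auto
qed

lemma Fm_inj: "X \<subseteq> atoms p n \<Longrightarrow> Fm p q i X \<inter> atoms p n = X"
  by (auto simp: Fm_def)

lemma L_fields: "carrier (L p n) = Pow (atoms p n)" "join (L p n) = (\<lambda>X Y. X \<union> Y)"
  "compl (L p n) = (\<lambda>X. atoms p n - X)" "rcomp (L p n) = rc p n" "conv (L p n) = (\<lambda>X. X)"
  "ident (L p n) = {atm.Id}"
  by (auto simp: L_def rc_def fun_eq_iff)

lemma restrict_fields[simp]: "carrier (restrict_ra R S) = S" "join (restrict_ra R S) = join R"
  "compl (restrict_ra R S) = compl R" "rcomp (restrict_ra R S) = rcomp R" "conv (restrict_ra R S) = conv R"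
  "ident (restrict_ra R S) = ident R"
  by (auto simp: restrict_ra_def)

theorem lemma5:
  fixes p q n i j :: nat
  assumes "3 \<le> p" and "p \<le> q" and "i \<le> p" and "j \<le> p" and "i \<noteq> j"
  shows "\<exists>S f. subalgebra S (L q n) \<and> ra_iso f (Lij p n i j) (restrict_ra (L q n) S)"
proof -
  define C where "C = {X. X \<subseteq> atoms p n \<and> (A i \<in> X \<longleftrightarrow> A j \<in> X)}"
  have cC: "carrier (Lij p n i j) = C" unfolding C_def using carrier_Lij assms(3,4,5) by blast
  have Lf: "join (Lij p n i j) = (\<lambda>X Y. X \<union> Y)" "compl (Lij p n i j) = (\<lambda>X. atoms p n - X)"
    "rcomp (Lij p n i j) = rc p n" "conv (Lij p n i j) = (\<lambda>X. X)" "ident (Lij p n i j) = {atm.Id}"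
    by (simp_all add: Lij_def L_fields)
  let ?f = "Fm p q i"
  define S where "S = ?f ` C"
  have IdC: "{atm.Id} \<in> C" unfolding C_def by auto
  have fId: "?f {atm.Id} = {atm.Id}" by (auto simp: Fm_def)
  have unC: "X \<union> Y \<in> C" if "X \<in> C" "Y \<in> C" for X Y using that unfolding C_def by auto
  have compC: "atoms p n - X \<in> C" if "X \<in> C" for X using that assms unfolding C_def by auto
  have rcC: "rc p n X Y \<in> C" if "X \<in> C" "Y \<in> C" for X Y
  proof -
    have x: "X \<subseteq> atoms p n" "A i \<in> X \<longleftrightarrow> A j \<in> X" and y: "Y \<subseteq> atoms p n" "A i \<in> Y \<longleftrightarrow> A j \<in> Y"
      using that unfolding C_def by auto
    have "A i \<in> rc p n X Y \<longleftrightarrow> A j \<in> rc p n X Y"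
    proof
      assume "A i \<in> rc p n X Y" then show "A j \<in> rc p n X Y"
        using rc_block[OF x(1) y(1) x(2) y(2) assms(3,4,5)] by blast
    next
      have x2: "A j \<in> X \<longleftrightarrow> A i \<in> X" "A j \<in> Y \<longleftrightarrow> A i \<in> Y" using x y by auto
      assume "A j \<in> rc p n X Y" then show "A i \<in> rc p n X Y"
        using rc_block[OF x(1) y(1) x2 assms(4,3)] assms(5) by blast
    qed
    then show ?thesis unfolding C_def using rc_sub[OF x(1) y(1)] by blast
  qed
  have hom: "?f (rc p n X Y) = rc q n (?f X) (?f Y)" if "X \<in> C" "Y \<in> C" for X Y
  proof -
    have x: "X \<subseteq> atoms p n" "A i \<in> X \<longleftrightarrow> A j \<in> X" and y: "Y \<subseteq> atoms p n" "A i \<in> Y \<longleftrightarrow> A j \<in> Y"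
      using that unfolding C_def by auto
    show ?thesis by (rule Fm_hom[OF x(1) y(1) x(2) y(2) assms(3,4,5,2)])
  qed
  have fcomp: "?f (atoms p n - X) = atoms q n - ?f X" if "X \<in> C" for X
  proof -
    have "X \<subseteq> atoms p n" using that unfolding C_def by auto
    then show ?thesis by (rule Fm_compl[OF _ assms(3,2)])
  qed
  have inj: "inj_on ?f C"
  proof (rule inj_onI)
    fix X Y assume "X \<in> C" "Y \<in> C" "?f X = ?f Y"
    then have "X \<subseteq> atoms p n" "Y \<subseteq> atoms p n" "?f X \<inter> atoms p n = ?f Y \<inter> atoms p n"
      unfolding C_def by auto
    then show "X = Y" using Fm_inj by metis
  qed
  have sub: "subalgebra S (L q n)"
    unfolding subalgebra_def L_fields
  proof (intro conjI ballI)
    show "S \<subseteq> Pow (atoms q n)"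
    proof
      fix x assume "x \<in> S"
      then obtain X where "X \<in> C" "x = ?f X" unfolding S_def by blast
      then show "x \<in> Pow (atoms q n)" using Fm_sub[of X p n q i] assms(2) unfolding C_def by auto
    qed
    show "{atm.Id} \<in> S" unfolding S_def using IdC fId by (metis image_eqI)
  next
    fix x y assume "x \<in> S" "y \<in> S"
    then obtain X Y where XY: "X \<in> C" "Y \<in> C" "x = ?f X" "y = ?f Y" unfolding S_def by blast
    have "x \<union> y = ?f (X \<union> Y)" using XY Fm_un by simp
    then show "x \<union> y \<in> S" unfolding S_def using unC[OF XY(1,2)] by blast
    have "rc q n x y = ?f (rc p n X Y)" using XY hom by simp
    then show "rc q n x y \<in> S" unfolding S_def using rcC[OF XY(1,2)] by blast
  next
    fix x assume "x \<in> S"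
    then obtain X where X: "X \<in> C" "x = ?f X" unfolding S_def by blast
    have "atoms q n - x = ?f (atoms p n - X)" using X fcomp by simp
    then show "atoms q n - x \<in> S" unfolding S_def using compC[OF X(1)] by blast
    show "x \<in> S" by fact
  qed
  have iso: "ra_iso ?f (Lij p n i j) (restrict_ra (L q n) S)"
    unfolding ra_iso_def restrict_fields cC Lf L_fields
  proof (intro conjI ballI)
    show "bij_betw ?f C S" unfolding S_def using inj by (simp add: bij_betw_def)
    show "?f {atm.Id} = {atm.Id}" by (rule fId)
  next
    fix X Y assume "X \<in> C" "Y \<in> C"
    then show "?f (X \<union> Y) = ?f X \<union> ?f Y" "?f (rc p n X Y) = rc q n (?f X) (?f Y)"
      using Fm_un hom by auto
  next
    fix X assume "X \<in> C"
    then show "?f (atoms p n - X) = atoms q n - ?f X" "?f X = ?f X" using fcomp by auto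
  qed
  show ?thesis using sub iso by blast
qed

end
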